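(* In the AGARCH setting of the context, suppose the distribution of $Z_0$ is not concentrated at two points. Then for any $\theta=(\alpha_0,\dots,\alpha_p,\beta_1,\dots,\beta_q,\gamma)^T\in K$, the relation $h_0(\theta)=h_0(\theta_0)$ a.s. implies $\gamma=\gamma^\circ$.
   Context: $(Z_t)$ i.i.d., $\mathbb EZ_0=0$, $\mathbb EZ_0^2=1$, $\mathcal F_t=\sigma(Z_k:k\le t)$. $((X_t,\sigma_t))$ is the unique strictly stationary ergodic solution of the AGARCH$(p,q)$ equations $X_t=\sigma_tZ_t$, $\sigma_t^2=\alpha_0^\circ+\sum_{i=1}^p\alpha_i^\circ(|X_{t-i}|-\gamma^\circ X_{t-i})^2+\sum_{j=1}^q\beta_j^\circ\sigma_{t-j}^2$ ($\sigma_t$ $\mathcal F_{t-1}$-measurable), true parameter $\theta_0=(\alpha_0^\circ,\dots,\alpha_p^\circ,\beta_1^\circ,\dots,\beta_q^\circ,\gamma^\circ)^T$ with $\alpha_0^\circ>0$, $\alpha_i^\circ,\beta_j^\circ\ge0$, $|\gamma^\circ|\le1$, $\alpha_i^\circ>0$ for some $i\ge1$ and $(\alpha_p^\circ,\beta_q^\circ)\ne(0,0)$. $K$ is a compact subset of $(0,\infty)\times[0,\infty)^p\times B\times[-1,1]$ containing $\theta_0$, $B=\{(\beta_1,\dots,\beta_q)^T\in[0,1)^q:\sum_j\beta_j<1\}$. $(\mathbf h_t)$, $\mathbf h_t=(h_t,\dots,h_{t-q+1})^T$, is the unique stationary ergodic sequence in $\mathbb C(K,[0,\infty)^q)$ with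 $h_t(\theta)=\alpha_0+\sum_{i=1}^p\alpha_i(|X_{t-i}|-\gamma X_{t-i})^2+\sum_{j=1}^q\beta_jh_{t-j}(\theta)$; equivalently $h_t(\theta)=\alpha_0(1-\sum_j\beta_j)^{-1}+\sum_{\ell\ge1}\xi_\ell(\theta)(|X_{t-\ell}|-\gamma X_{t-\ell})^2$ with $\sum_{\ell\ge1}\xi_\ell(\theta)z^\ell=(\sum_i\alpha_iz^i)/(1-\sum_j\beta_jz^j)$, and $h_t(\theta_0)=\sigma_t^2$ a.s. *)

theory Defs
  imports "HOL-Probability.Probability" "HOL-Computational_Algebra.Formal_Power_Series"
begin

text \<open>A parameter theta = (alpha_0,...,alpha_p, beta_1,...,beta_q, gamma) is encoded as a triple
  (a, b, g) with a i = alpha_i (i = 0..p), b j = beta_j (j = 1..q), g = gamma; unused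
  coordinates are normalised to 0 (a i = 0 for i > p, b 0 = 0, b j = 0 for j > q), so that the
  parameter space is homeomorphic to the paper's
  (0,inf) x [0,inf)^p x B x [-1,1] inside the product topology.\<close>

type_synonym agarch_param = "(nat \<Rightarrow> real) \<times> (nat \<Rightarrow> real) \<times> real"

definition agarch_param_space :: "nat \<Rightarrow> nat \<Rightarrow> agarch_param set" where
  "agarch_param_space p q =
     {(a, b, g). a 0 > 0 \<and> (\<forall>i\<in>{1..p}. a i \<ge> 0) \<and> (\<forall>i>p. a i = 0)
        \<and> b 0 = 0 \<and> (\<forall>j\<in>{1..q}. b j \<ge> 0) \<and> (\<forall>j>q. b j = 0)
        \<and> (\<Sum>j=1..q. b j) < 1 \<and> \<bar>g\<bar> \<le> 1}"

definition agarch_xi :: "nat \<Rightarrow> nat \<Rightarrow> agarch_param \<Rightarrow> nat \<Rightarrow> real" where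
  "agarch_xi p q \<theta> l =
     (case \<theta> of (a, b, g) \<Rightarrow>
        fps_nth (Abs_fps (\<lambda>i. if 1 \<le> i \<and> i \<le> p then a i else 0)
                 / (1 - Abs_fps (\<lambda>j. if 1 \<le> j \<and> j \<le> q then b j else 0))) l)"

definition agarch_h :: "nat \<Rightarrow> nat \<Rightarrow> (int \<Rightarrow> 'w \<Rightarrow> real) \<Rightarrow> agarch_param \<Rightarrow> int \<Rightarrow> 'w \<Rightarrow> ennreal" where
  "agarch_h p q X \<theta> t \<omega> =
     (case \<theta> of (a, b, g) \<Rightarrow>
        ennreal (a 0 / (1 - (\<Sum>j=1..q. b j)))
        + (\<Sum>l. ennreal (agarch_xi p q \<theta> (Suc l)
                 * (\<bar>X (t - int (Suc l)) \<omega>\<bar> - g * X (t - int (Suc l)) \<omega>)\<^sup>2)))"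

definition natural_filtration :: "'w measure \<Rightarrow> (int \<Rightarrow> 'w \<Rightarrow> real) \<Rightarrow> int \<Rightarrow> 'w measure" where
  "natural_filtration M Z t =
     sigma (space M) (\<Union>k\<in>{..t}. {Z k -` B \<inter> space M | B. B \<in> sets borel})"

definition path_law :: "'w measure \<Rightarrow> (int \<Rightarrow> 'w \<Rightarrow> 'b::topological_space) \<Rightarrow> (int \<Rightarrow> 'b) measure" where
  "path_law M Y = distr M (PiM UNIV (\<lambda>_. borel)) (\<lambda>\<omega> t. Y t \<omega>)"

definition path_shift :: "(int \<Rightarrow> 'b) \<Rightarrow> int \<Rightarrow> 'b" where
  "path_shift f = (\<lambda>t. f (t + 1))"

definition strictly_stationary :: "'w measure \<Rightarrow> (int \<Rightarrow> 'w \<Rightarrow> 'b::topological_space) \<Rightarrow> bool" where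
  "strictly_stationary M Y \<longleftrightarrow> path_law M (\<lambda>t. Y (t + 1)) = path_law M Y"

definition ergodic_process :: "'w measure \<Rightarrow> (int \<Rightarrow> 'w \<Rightarrow> 'b::topological_space) \<Rightarrow> bool" where
  "ergodic_process M Y \<longleftrightarrow>
     (\<forall>A \<in> sets (PiM (UNIV::int set) (\<lambda>_. (borel :: 'b measure))).
        path_shift -` A = A \<longrightarrow>
          emeasure (path_law M Y) A = 0 \<or> emeasure (path_law M Y) A = 1)"

end

theory Submission
  imports Defs
begin

lemma xi_rec:
  fixes a b :: "nat \<Rightarrow> real" and g :: real and p q l :: nat
  defines "al \<equiv> \<lambda>i. if 1 \<le> i \<and> i \<le> p then a i else 0"
  defines "be \<equiv> \<lambda>j. if 1 \<le> j \<and> j \<le> q then b j else 0"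
  shows "agarch_xi p q (a,b,g) l = al l + (\<Sum>j=1..l. be j * agarch_xi p q (a,b,g) (l - j))"
proof -
  define A where "A = Abs_fps al"
  define B where "B = Abs_fps be"
  define F where "F = A / (1 - B)"
  have xi: "\<And>l. agarch_xi p q (a,b,g) l = fps_nth F l"
    unfolding agarch_xi_def F_def A_def B_def al_def be_def by simp
  have B0: "fps_nth (1 - B) 0 \<noteq> 0" by (simp add: B_def be_def)
  have "F * (1 - B) = A"
    unfolding F_def using B0 by (simp add: fps_divide_unit mult.assoc inverse_mult_eq_1)
  then have "F = A + B * F" by (simp add: algebra_simps)
  then have "fps_nth F l = fps_nth A l + fps_nth (B * F) l" by (metis fps_add_nth)
  also have "fps_nth (B * F) l = (\<Sum>i=0..l. be i * fps_nth F (l - i))"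
    by (simp add: fps_mult_nth B_def)
  also have "\<dots> = (\<Sum>i=1..l. be i * fps_nth F (l - i))"
    by (simp add: sum.atLeast_Suc_atMost be_def)
  finally show ?thesis by (simp add: xi A_def)
qed

lemma xi_nonneg:
  assumes "\<forall>i\<in>{1..p}. a i \<ge> 0" "\<forall>j\<in>{1..q}. b j \<ge> 0"
  shows "agarch_xi p q (a,b,g) l \<ge> 0"
proof (induction l rule: less_induct)
  case (less l)
  show ?case
    apply (subst xi_rec)
    using assms less by (intro add_nonneg_nonneg sum_nonneg mult_nonneg_nonneg) auto
qed

lemma xi_ge_alpha:
  assumes "\<forall>i\<in>{1..p}. a i \<ge> 0" "\<forall>j\<in>{1..q}. b j \<ge> 0" "i \<in> {1..p}"
  shows "agarch_xi p q (a,b,g) i \<ge> a i"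
proof -
  have "0 \<le> (\<Sum>j=1..i. (if 1 \<le> j \<and> j \<le> q then b j else 0) * agarch_xi p q (a,b,g) (i - j))"
    using assms xi_nonneg[OF assms(1,2)] by (intro sum_nonneg mult_nonneg_nonneg) auto
  then show ?thesis using assms(3) by (subst xi_rec) auto
qed

lemma xi_0: "agarch_xi p q (a,b,g) 0 = 0"
  by (subst xi_rec) simp
lemma sum_swap_tri:
  fixes h :: "nat \<Rightarrow> nat \<Rightarrow> real"
  shows "(\<Sum>l=1..N. \<Sum>j=1..l. h j l) = (\<Sum>j=1..N. \<Sum>l=j..N. h j l)"
proof (induction N)
  case 0 then show ?case by simp
next
  case (Suc N)
  have "(\<Sum>j=1..Suc N. \<Sum>l=j..Suc N. h j l) = (\<Sum>j=1..Suc N. (\<Sum>l=j..N. h j l) + h j (Suc N))"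
    by (intro sum.cong refl) (simp add: sum.atLeast_Suc_atMost_Suc_shift del: sum.cl_ivl_Suc, auto)
  then show ?case using Suc by (simp add: sum.distrib)
qed

lemma sum_le_cut:
  fixes f :: "nat \<Rightarrow> real"
  assumes "\<And>i. f i \<ge> 0" "\<And>i. i > p \<Longrightarrow> f i = 0"
  shows "(\<Sum>i=1..n. f i) \<le> (\<Sum>i=1..p. f i)"
proof -
  have "(\<Sum>i=1..n. f i) \<le> (\<Sum>i=1..max n p. f i)"
    using assms by (intro sum_mono2) auto
  also have "\<dots> = (\<Sum>i=1..p. f i)"
    using assms by (intro sum.mono_neutral_right) auto
  finally show ?thesis .
qed

lemma unroll:
  fixes xi al be :: "nat \<Rightarrow> real" and Y S :: "int \<Rightarrow> real"
  assumes rec: "\<And>l. xi l = al l + (\<Sum>j=1..l. be j * xi (l - j))"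
  and xi0: "xi 0 = 0"
  and nxi: "\<And>l. xi l \<ge> 0" and nbe: "\<And>j. be j \<ge> 0" and nal: "\<And>l. al l \<ge> 0"
  and nY: "\<And>t. Y t \<ge> 0" and nS: "\<And>t. S t \<ge> 0"
  and alp: "\<And>i. i > p \<Longrightarrow> al i = 0" and bq: "\<And>j. j > q \<Longrightarrow> be j = 0"
  and SS: "\<And>t. S t \<ge> (\<Sum>i=1..p. al i * Y (t - int i)) + (\<Sum>j=1..q. be j * S (t - int j))"
  shows "(\<Sum>l=1..n. xi l * Y (t - int l)) \<le> S t"
proof (induction n arbitrary: t)
  case 0 then show ?case using nS by simp
next
  case (Suc n)
  have mono: "(\<Sum>l=1..m. xi l * Y (s - int l)) \<le> S s" if "m \<le> n" for m s
  proof -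
    have "(\<Sum>l=1..m. xi l * Y (s - int l)) \<le> (\<Sum>l=1..n. xi l * Y (s - int l))"
      using that nxi nY by (intro sum_mono2) (auto intro: mult_nonneg_nonneg)
    also have "\<dots> \<le> S s" by (rule Suc.IH)
    finally show ?thesis .
  qed
  have "(\<Sum>l=1..Suc n. xi l * Y (t - int l)) =
        (\<Sum>l=1..Suc n. al l * Y (t - int l)) + (\<Sum>l=1..Suc n. \<Sum>j=1..l. be j * xi (l - j) * Y (t - int l))"
  proof -
    have "\<And>l. xi l * Y (t - int l) = al l * Y (t - int l) + (\<Sum>j=1..l. be j * xi (l - j) * Y (t - int l))"
      by (subst rec) (simp add: distrib_right sum_distrib_right)
    then show ?thesis by (simp add: sum.distrib)
  qed
  also have "(\<Sum>l=1..Suc n. al l * Y (t - int l)) \<le> (\<Sum>i=1..p. al i * Y (t - int i))"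
    using nal nY alp by (intro sum_le_cut) (auto intro: mult_nonneg_nonneg)
  also have "(\<Sum>l=1..Suc n. \<Sum>j=1..l. be j * xi (l - j) * Y (t - int l))
           = (\<Sum>j=1..Suc n. \<Sum>l=j..Suc n. be j * xi (l - j) * Y (t - int l))"
    by (rule sum_swap_tri)
  also have "\<dots> \<le> (\<Sum>j=1..Suc n. be j * S (t - int j))"
  proof (intro sum_mono)
    fix j assume j: "j \<in> {1..Suc n}"
    have "(\<Sum>l=j..Suc n. be j * xi (l - j) * Y (t - int l))
        = (\<Sum>m=0..Suc n - j. be j * xi m * Y ((t - int j) - int m))"
    proof -
      have "{j..Suc n} = {0+j..(Suc n - j)+j}" using j by auto
      then show ?thesis
        by (simp only: sum.shift_bounds_cl_nat_ivl) (simp add: algebra_simps)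
    qed
    also have "\<dots> = be j * (\<Sum>m=1..Suc n - j. xi m * Y ((t - int j) - int m))"
      by (simp add: sum_distrib_left sum.atLeast_Suc_atMost xi0 mult.assoc)
    also have "\<dots> \<le> be j * S (t - int j)"
      using j by (intro mult_left_mono mono nbe) auto
    finally show "(\<Sum>l=j..Suc n. be j * xi (l - j) * Y (t - int l)) \<le> be j * S (t - int j)" .
  qed
  also have "\<dots> \<le> (\<Sum>j=1..q. be j * S (t - int j))"
    using nbe nS bq by (intro sum_le_cut) (auto intro: mult_nonneg_nonneg)
  finally show ?case using SS[of t] by linarith
qed

lemma nf_space[simp]: "space (natural_filtration M Z t) = space M"
  unfolding natural_filtration_def by (simp add: space_measure_of_conv)

lemma nf_sets: "sets (natural_filtration M Z t) =
   sigma_sets (space M) (\<Union>k\<in>{..t}. {Z k -` B \<inter> space M | B. B \<in> sets borel})"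
  unfolding natural_filtration_def by (rule sets_measure_of) auto

lemma nf_subalg:
  assumes "\<And>j. Z j \<in> borel_measurable M"
  shows "subalgebra M (natural_filtration M Z t)"
  unfolding subalgebra_def nf_sets
  using assms by (auto intro!: sets.sigma_sets_subset measurable_sets)

lemma nf_mono:
  assumes "s \<le> t"
  shows "subalgebra (natural_filtration M Z t) (natural_filtration M Z s)"
  unfolding subalgebra_def nf_sets nf_space
proof (intro conjI sigma_sets_mono subsetI refl)
  fix x assume "x \<in> (\<Union>k\<in>{..s}. {Z k -` B \<inter> space M | B. B \<in> sets borel})"
  then have "x \<in> (\<Union>k\<in>{..t}. {Z k -` B \<inter> space M | B. B \<in> sets borel})" using assms by (fastforce intro: order_trans)
  then show "x \<in> sigma_sets (space M) (\<Union>k\<in>{..t}. {Z k -` B \<inter> space M | B. B \<in> sets borel})"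
    by (rule sigma_sets.Basic)
qed

lemma nf_Z:
  assumes "j \<le> t"
  shows "Z j \<in> borel_measurable (natural_filtration M Z t)"
proof (rule measurableI)
  fix A :: "real set" assume "A \<in> sets borel"
  then show "Z j -` A \<inter> space (natural_filtration M Z t) \<in> sets (natural_filtration M Z t)"
    unfolding nf_sets nf_space using assms by (intro sigma_sets.Basic) blast
qed simp

lemma h_split:
  fixes X \<sigma> Z :: "int \<Rightarrow> 'w \<Rightarrow> real"
  assumes X: "\<And>t. X t \<omega> = \<sigma> t \<omega> * Z t \<omega>"
  and z: "\<And>m. m < k \<Longrightarrow> agarch_xi p q (a,b,g) (Suc m) = 0"
  shows "agarch_h p q X (a,b,g) 0 \<omega> =
    ennreal (agarch_xi p q (a,b,g) (Suc k) * (\<bar>\<sigma> (0 - int (Suc k)) \<omega> * Z (0 - int (Suc k)) \<omega>\<bar>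
       - g * (\<sigma> (0 - int (Suc k)) \<omega> * Z (0 - int (Suc k)) \<omega>))\<^sup>2)
    + (ennreal (a 0 / (1 - (\<Sum>j=1..q. b j)))
       + (\<Sum>j. ennreal (agarch_xi p q (a,b,g) (Suc (j + Suc k)) *
            (\<bar>\<sigma> (0 - int (Suc (j + Suc k))) \<omega> * Z (0 - int (Suc (j + Suc k))) \<omega>\<bar>
             - g * (\<sigma> (0 - int (Suc (j + Suc k))) \<omega> * Z (0 - int (Suc (j + Suc k))) \<omega>))\<^sup>2)))"
proof -
  define T where "T = (\<lambda>l. ennreal (agarch_xi p q (a,b,g) (Suc l) *
            (\<bar>\<sigma> (0 - int (Suc l)) \<omega> * Z (0 - int (Suc l)) \<omega>\<bar>
             - g * (\<sigma> (0 - int (Suc l)) \<omega> * Z (0 - int (Suc l)) \<omega>))\<^sup>2))"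
  have h: "agarch_h p q X (a,b,g) 0 \<omega> = ennreal (a 0 / (1 - (\<Sum>j=1..q. b j))) + suminf T"
    unfolding agarch_h_def T_def by (simp add: X)
  have "suminf T = (\<Sum>j. T (j + Suc k)) + (\<Sum>j<Suc k. T j)"
    by (rule suminf_offset) simp
  also have "(\<Sum>j<Suc k. T j) = T k"
    using z by (simp add: T_def)
  finally have "suminf T = (\<Sum>j. T (j + Suc k)) + T k" .
  then show ?thesis unfolding h T_def by (simp only: ac_simps)
qed


lemma h_fin:
  fixes X \<sigma> :: "int \<Rightarrow> 'w \<Rightarrow> real"
  assumes ann: "\<forall>i\<in>{1..p}. a i \<ge> 0" and bnn: "\<forall>j\<in>{1..q}. b j \<ge> 0" and a0: "a 0 \<ge> 0"
  and eq: "\<forall>t. (\<sigma> t \<omega>)\<^sup>2 = a 0 + (\<Sum>i=1..p. a i * (\<bar>X (t - int i) \<omega>\<bar> - g * X (t - int i) \<omega>)\<^sup>2)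
                      + (\<Sum>j=1..q. b j * (\<sigma> (t - int j) \<omega>)\<^sup>2)"
  shows "agarch_h p q X (a,b,g) 0 \<omega> < \<infinity>"
proof -
  define xi where "xi = agarch_xi p q (a,b,g)"
  define al where "al = (\<lambda>i. if 1 \<le> i \<and> i \<le> p then a i else 0)"
  define be where "be = (\<lambda>j. if 1 \<le> j \<and> j \<le> q then b j else 0)"
  define Y where "Y = (\<lambda>t. (\<bar>X t \<omega>\<bar> - g * X t \<omega>)\<^sup>2)"
  define S where "S = (\<lambda>t. (\<sigma> t \<omega>)\<^sup>2)"
  have xinn: "\<And>l. xi l \<ge> 0" unfolding xi_def using xi_nonneg ann bnn by blast
  have U: "(\<Sum>l=1..n. xi l * Y (t - int l)) \<le> S t" for n t
  proof (rule unroll[where al=al and be=be and p=p and q=q])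
    show "\<And>l. xi l = al l + (\<Sum>j=1..l. be j * xi (l - j))"
      unfolding xi_def al_def be_def by (rule xi_rec)
    show "xi 0 = 0" unfolding xi_def by (rule xi_0)
    show "\<And>l. xi l \<ge> 0" by (rule xinn)
    show "\<And>j. be j \<ge> 0" using bnn by (auto simp: be_def)
    show "\<And>l. al l \<ge> 0" using ann by (auto simp: al_def)
    show "\<And>t. Y t \<ge> 0" by (simp add: Y_def)
    show "\<And>t. S t \<ge> 0" by (simp add: S_def)
    show "\<And>i. i > p \<Longrightarrow> al i = 0" by (simp add: al_def)
    show "\<And>j. j > q \<Longrightarrow> be j = 0" by (simp add: be_def)
    fix t
    have e1: "(\<Sum>i=1..p. al i * Y (t - int i)) = (\<Sum>i=1..p. a i * (\<bar>X (t - int i) \<omega>\<bar> - g * X (t - int i) \<omega>)\<^sup>2)"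
      by (intro sum.cong) (auto simp: al_def Y_def)
    have e2: "(\<Sum>j=1..q. be j * S (t - int j)) = (\<Sum>j=1..q. b j * S (t - int j))"
      by (intro sum.cong) (auto simp: be_def)
    have st: "S t = a 0 + (\<Sum>i=1..p. a i * (\<bar>X (t - int i) \<omega>\<bar> - g * X (t - int i) \<omega>)\<^sup>2)
                      + (\<Sum>j=1..q. b j * S (t - int j))"
      using eq[rule_format, of t] by (simp only: S_def)
    show "S t \<ge> (\<Sum>i=1..p. al i * Y (t - int i)) + (\<Sum>j=1..q. be j * S (t - int j))"
      using st a0 e1 e2 by linarith
  qed
  have "(\<Sum>l. ennreal (xi (Suc l) * (\<bar>X (0 - int (Suc l)) \<omega>\<bar> - g * X (0 - int (Suc l)) \<omega>)\<^sup>2)) \<le> ennreal (S 0)"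
  proof (rule suminf_le_const)
    fix n
    have "(\<Sum>l<n. ennreal (xi (Suc l) * (\<bar>X (0 - int (Suc l)) \<omega>\<bar> - g * X (0 - int (Suc l)) \<omega>)\<^sup>2))
        = ennreal (\<Sum>l<n. xi (Suc l) * Y (0 - int (Suc l)))"
      using xinn by (subst sum_ennreal) (auto simp: Y_def)
    also have "(\<Sum>l<n. xi (Suc l) * Y (0 - int (Suc l))) = (\<Sum>l=1..n. xi l * Y (0 - int l))"
      by (simp add: sum.atLeast1_atMost_eq)
    also have "ennreal \<dots> \<le> ennreal (S 0)" using U by (rule ennreal_leI)
    finally show "(\<Sum>l<n. ennreal (xi (Suc l) * (\<bar>X (0 - int (Suc l)) \<omega>\<bar> - g * X (0 - int (Suc l)) \<omega>)\<^sup>2)) \<le> ennreal (S 0)" .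
  qed simp
  then have "agarch_h p q X (a,b,g) 0 \<omega> \<le> ennreal (a 0 / (1 - (\<Sum>j=1..q. b j))) + ennreal (S 0)"
    unfolding agarch_h_def xi_def by (simp add: add_left_mono)
  also have "\<dots> < \<infinity>" by (simp flip: ennreal_plus)
  finally show ?thesis .
qed

lemma alg_pos: "u > 0 \<Longrightarrow> A*(\<bar>u\<bar> - g*u)^2 - B*(\<bar>u\<bar> - g0*u)^2 = u^2 * (A*(1-g)^2 - B*(1-g0)^2)" for u A B g g0 :: real
  by (simp add: power2_eq_square algebra_simps)
lemma alg_neg: "u < 0 \<Longrightarrow> A*(\<bar>u\<bar> - g*u)^2 - B*(\<bar>u\<bar> - g0*u)^2 = u^2 * (A*(1+g)^2 - B*(1+g0)^2)" for u A B g g0 :: real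
  by (simp add: power2_eq_square algebra_simps)

lemma key_alg:
  fixes A B g g0 C u1 u2 u3 :: real
  assumes A: "A \<ge> 0" and B: "B \<ge> 0" and AB: "A > 0 \<or> B > 0" and g: "\<bar>g\<bar> \<le> 1" and g0: "\<bar>g0\<bar> \<le> 1"
  and E: "\<And>u. u \<in> {u1,u2,u3} \<Longrightarrow> A*(\<bar>u\<bar> - g*u)^2 - B*(\<bar>u\<bar> - g0*u)^2 = C"
  and u1: "u1 > 0" and u2: "u2 < 0" and u31: "u3 \<noteq> u1" and u32: "u3 \<noteq> u2"
  shows "g = g0"
proof -
  define P where "P = A*(1-g)^2 - B*(1-g0)^2"
  define N where "N = A*(1+g)^2 - B*(1+g0)^2"
  have e1: "u1^2 * P = C" using E[of u1] alg_pos[OF u1] P_def by simp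
  have e2: "u2^2 * N = C" using E[of u2] alg_neg[OF u2] N_def by simp
  have PN: "P = 0 \<and> N = 0"
  proof (cases "u3 = 0")
    case True
    then have "C = 0" using E[of u3] by simp
    then show ?thesis using e1 e2 u1 u2 by simp
  next
    case False
    show ?thesis
    proof (cases "u3 > 0")
      case True
      have e3: "u3^2 * P = C" using E[of u3] alg_pos[OF True] P_def by simp
      have "u3^2 \<noteq> u1^2" using True u1 u31 by (simp add: power2_eq_iff)
      then have "P = 0" using e1 e3 by (metis mult_right_cancel)
      then show ?thesis using e1 e2 u2 by simp
    next
      case F2: False
      then have n: "u3 < 0" using False by simp
      have e3: "u3^2 * N = C" using E[of u3] alg_neg[OF n] N_def by simp
      have "u3^2 \<noteq> u2^2" using n u2 u32 by (simp add: power2_eq_iff)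
      then have "N = 0" using e2 e3 by (metis mult_right_cancel)
      then show ?thesis using e1 e2 u1 by simp
    qed
  qed
  have s1: "sqrt A * (1-g) = sqrt B * (1-g0)"
  proof -
    have "A*(1-g)^2 = B*(1-g0)^2" using PN P_def by simp
    then have "sqrt (A*(1-g)^2) = sqrt (B*(1-g0)^2)" by simp
    then show ?thesis using g g0 by (simp add: real_sqrt_mult)
  qed
  have s2: "sqrt A * (1+g) = sqrt B * (1+g0)"
  proof -
    have "A*(1+g)^2 = B*(1+g0)^2" using PN N_def by simp
    then have "sqrt (A*(1+g)^2) = sqrt (B*(1+g0)^2)" by simp
    then show ?thesis using g g0 by (simp add: real_sqrt_mult)
  qed
  have "sqrt A * (1-g) + sqrt A*(1+g) = sqrt B*(1-g0) + sqrt B*(1+g0)" using s1 s2 by simp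
  then have "sqrt A = sqrt B" by (simp add: algebra_simps)
  moreover have "sqrt A > 0" using \<open>sqrt A = sqrt B\<close> AB by auto
  ultimately show ?thesis using s1 by (simp add: algebra_simps)
qed

lemma enn_eq_real:
  fixes u v :: real and c1 c2 :: ennreal
  assumes e: "ennreal u + c1 = ennreal v + c2" and c2: "c2 < \<infinity>" and u: "u \<ge> 0" and v: "v \<ge> 0"
  shows "u - v = enn2real c2 - enn2real c1"
proof -
  have "ennreal v + c2 < \<infinity>" using c2 by (simp add: less_top[symmetric] ennreal_add_eq_top)
  have c1: "c1 < \<infinity>"
  proof (rule ccontr)
    assume "\<not> c1 < \<infinity>"
    then have "c1 = \<infinity>" by (simp add: not_less top_unique)
    then have "ennreal v + c2 = \<infinity>" using e by simp
    then show False using \<open>ennreal v + c2 < \<infinity>\<close> by simp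
  qed
  have "enn2real (ennreal u + c1) = enn2real (ennreal v + c2)" using e by simp
  then have "u + enn2real c1 = v + enn2real c2"
    using c1 c2 u v by (simp add: enn2real_plus)
  then show ?thesis by linarith
qed

theorem lemma5p3:
  fixes M :: "'w measure"
    and Z X \<sigma> :: "int \<Rightarrow> 'w \<Rightarrow> real"
    and p q :: nat
    and K :: "agarch_param set"
    and a0 b0 a b :: "nat \<Rightarrow> real"
    and g0 g :: real
  assumes prob: "prob_space M"
    and Z_indep: "prob_space.indep_vars M (\<lambda>_. borel) Z UNIV"
    and Z_ident: "\<forall>t. distr M borel (Z t) = distr M borel (Z 0)"
    and Z_int: "integrable M (Z 0)" and Z_mean: "(\<integral>\<omega>. Z 0 \<omega> \<partial>M) = 0"
    and Z_int2: "integrable M (\<lambda>\<omega>. (Z 0 \<omega>)\<^sup>2)" and Z_var: "(\<integral>\<omega>. (Z 0 \<omega>)\<^sup>2 \<partial>M) = 1"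
    and Z_not_two: "\<forall>x y. measure M {\<omega> \<in> space M. Z 0 \<omega> = x \<or> Z 0 \<omega> = y} \<noteq> 1"
    and X_meas: "\<forall>t. X t \<in> borel_measurable M"
    and \<sigma>_adapted: "\<forall>t. \<sigma> t \<in> borel_measurable (natural_filtration M Z (t - 1))"
    and \<sigma>_nonneg: "\<forall>t. \<forall>\<omega>\<in>space M. \<sigma> t \<omega> \<ge> 0"
    and X_eq: "AE \<omega> in M. \<forall>t. X t \<omega> = \<sigma> t \<omega> * Z t \<omega>"
    and \<sigma>_eq: "AE \<omega> in M. \<forall>t. (\<sigma> t \<omega>)\<^sup>2 =
                 a0 0 + (\<Sum>i=1..p. a0 i * (\<bar>X (t - int i) \<omega>\<bar> - g0 * X (t - int i) \<omega>)\<^sup>2)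
                      + (\<Sum>j=1..q. b0 j * (\<sigma> (t - int j) \<omega>)\<^sup>2)"
    and stat: "strictly_stationary M (\<lambda>t \<omega>. (X t \<omega>, \<sigma> t \<omega>))"
    and ergo: "ergodic_process M (\<lambda>t \<omega>. (X t \<omega>, \<sigma> t \<omega>))"
    and K_compact: "compact K"
    and K_sub: "K \<subseteq> agarch_param_space p q"
    and \<theta>0_in: "(a0, b0, g0) \<in> K"
    and \<theta>0_alpha: "\<exists>i\<in>{1..p}. a0 i > 0"
    and \<theta>0_last: "a0 p \<noteq> 0 \<or> b0 q \<noteq> 0"
    and \<theta>_in: "(a, b, g) \<in> K"
    and h_eq: "AE \<omega> in M. agarch_h p q X (a, b, g) 0 \<omega> = agarch_h p q X (a0, b0, g0) 0 \<omega>"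
  shows "g = g0"
proof -
  interpret prob_space M by (rule prob)
  have th0: "(a0,b0,g0) \<in> agarch_param_space p q" using \<theta>0_in K_sub by auto
  have th: "(a,b,g) \<in> agarch_param_space p q" using \<theta>_in K_sub by auto
  from th0 have a00: "a0 0 > 0" and a0nn: "\<forall>i\<in>{1..p}. a0 i \<ge> 0" and b0nn: "\<forall>j\<in>{1..q}. b0 j \<ge> 0"
    and g0b: "\<bar>g0\<bar> \<le> 1" by (auto simp: agarch_param_space_def)
  from th have ann: "\<forall>i\<in>{1..p}. a i \<ge> 0" and bnn: "\<forall>j\<in>{1..q}. b j \<ge> 0"
    and gb: "\<bar>g\<bar> \<le> 1" by (auto simp: agarch_param_space_def)
  define xa where "xa = agarch_xi p q (a,b,g)"
  define x0 where "x0 = agarch_xi p q (a0,b0,g0)"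
  have xa_nn: "\<And>l. xa l \<ge> 0" unfolding xa_def using xi_nonneg[OF ann bnn] by blast
  have x0_nn: "\<And>l. x0 l \<ge> 0" unfolding x0_def using xi_nonneg[OF a0nn b0nn] by blast
  have ex: "\<exists>m. xa (Suc m) > 0 \<or> x0 (Suc m) > 0"
  proof -
    obtain i where i: "i \<in> {1..p}" "a0 i > 0" using \<theta>0_alpha by auto
    then have "x0 i > 0" using xi_ge_alpha[OF a0nn b0nn i(1), of g0] unfolding x0_def by linarith
    moreover from i have "i = Suc (i - 1)" by auto
    ultimately show ?thesis by metis
  qed
  define k where "k = (LEAST m. xa (Suc m) > 0 \<or> x0 (Suc m) > 0)"
  have kpos: "xa (Suc k) > 0 \<or> x0 (Suc k) > 0" using LeastI_ex[OF ex] unfolding k_def .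
  have kmin: "xa (Suc m) = 0 \<and> x0 (Suc m) = 0" if "m < k" for m
  proof -
    have "\<not> (xa (Suc m) > 0 \<or> x0 (Suc m) > 0)" using not_less_Least[OF that[unfolded k_def]] .
    then show ?thesis using xa_nn[of "Suc m"] x0_nn[of "Suc m"] by linarith
  qed
  define tk :: int where "tk = 0 - int (Suc k)"
  have Zm: "\<And>t. Z t \<in> borel_measurable M" using Z_indep unfolding indep_vars_def2 by auto
  have \<sigma>m: "\<And>t. \<sigma> t \<in> borel_measurable M"
    using \<sigma>_adapted nf_subalg[of Z M, OF Zm] measurable_from_subalg by blast
  define F where "F = natural_filtration M Z (tk - 1)"
  have Fsub: "subalgebra M F" unfolding F_def by (rule nf_subalg[OF Zm])
  have Zf: "\<And>j. Z (0 - int (Suc (j + Suc k))) \<in> borel_measurable F"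
    unfolding F_def tk_def by (rule nf_Z) simp
  have \<sigma>f: "\<And>j. \<sigma> (0 - int (Suc (j + Suc k))) \<in> borel_measurable F"
  proof -
    fix j
    have "subalgebra F (natural_filtration M Z (0 - int (Suc (j + Suc k)) - 1))"
      unfolding F_def tk_def by (rule nf_mono) simp
    then show "\<sigma> (0 - int (Suc (j + Suc k))) \<in> borel_measurable F"
      using \<sigma>_adapted measurable_from_subalg by blast
  qed
  have \<sigma>tk: "\<sigma> tk \<in> borel_measurable F"
    using \<sigma>_adapted unfolding F_def by blast
  define C1 where "C1 = (\<lambda>\<omega>. ennreal (a 0 / (1 - (\<Sum>j=1..q. b j)))
       + (\<Sum>j. ennreal (xa (Suc (j + Suc k)) *
            (\<bar>\<sigma> (0 - int (Suc (j + Suc k))) \<omega> * Z (0 - int (Suc (j + Suc k))) \<omega>\<bar>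
             - g * (\<sigma> (0 - int (Suc (j + Suc k))) \<omega> * Z (0 - int (Suc (j + Suc k))) \<omega>))\<^sup>2)))"
  define C0 where "C0 = (\<lambda>\<omega>. ennreal (a0 0 / (1 - (\<Sum>j=1..q. b0 j)))
       + (\<Sum>j. ennreal (x0 (Suc (j + Suc k)) *
            (\<bar>\<sigma> (0 - int (Suc (j + Suc k))) \<omega> * Z (0 - int (Suc (j + Suc k))) \<omega>\<bar>
             - g0 * (\<sigma> (0 - int (Suc (j + Suc k))) \<omega> * Z (0 - int (Suc (j + Suc k))) \<omega>))\<^sup>2)))"
  define W where "W = (\<lambda>\<omega>. (\<sigma> tk \<omega>, C1 \<omega>, C0 \<omega>))"
  define N where "N = (borel \<Otimes>\<^sub>M (borel \<Otimes>\<^sub>M borel) :: (real \<times> ennreal \<times> ennreal) measure)"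
  define P where "P = (\<lambda>(w::real \<times> ennreal \<times> ennreal) (z::real).
     ennreal (xa (Suc k) * (\<bar>fst w * z\<bar> - g * (fst w * z))\<^sup>2) + fst (snd w)
   = ennreal (x0 (Suc k) * (\<bar>fst w * z\<bar> - g0 * (fst w * z))\<^sup>2) + snd (snd w))"
  define Q where "Q = (\<lambda>(w::real \<times> ennreal \<times> ennreal). fst w > 0 \<and> snd (snd w) < \<infinity>)"
  have WF: "W \<in> F \<rightarrow>\<^sub>M N"
  proof -
    note [measurable] = Zf \<sigma>f \<sigma>tk
    show ?thesis unfolding W_def N_def C1_def C0_def by measurable
  qed
  have WM: "W \<in> M \<rightarrow>\<^sub>M N" using measurable_from_subalg[OF Fsub WF] .
  define V where "V = (\<lambda>\<omega>. (Z tk \<omega>, 0::ennreal, 0::ennreal))"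
  define V0 where "V0 = (\<lambda>\<omega>. (Z 0 \<omega>, 0::ennreal, 0::ennreal))"
  have VM: "V \<in> M \<rightarrow>\<^sub>M N" unfolding V_def N_def using Zm by measurable
  have V0M: "V0 \<in> M \<rightarrow>\<^sub>M N" unfolding V0_def N_def using Zm by measurable
  have Pmeas: "{x \<in> space (N \<Otimes>\<^sub>M N). P (fst x) (fst (snd x))} \<in> sets (N \<Otimes>\<^sub>M N)"
    unfolding P_def N_def by measurable
  have Qmeas: "{x \<in> space N. Q x} \<in> sets N"
    unfolding Q_def N_def by measurable
  have split1: "agarch_h p q X (a,b,g) 0 \<omega> = ennreal (xa (Suc k) * (\<bar>\<sigma> tk \<omega> * Z tk \<omega>\<bar> - g * (\<sigma> tk \<omega> * Z tk \<omega>))\<^sup>2) + C1 \<omega>"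
    if "\<forall>t. X t \<omega> = \<sigma> t \<omega> * Z t \<omega>" for \<omega>
    unfolding C1_def xa_def tk_def by (rule h_split) (use that kmin in \<open>auto simp: xa_def\<close>)
  have split0: "agarch_h p q X (a0,b0,g0) 0 \<omega> = ennreal (x0 (Suc k) * (\<bar>\<sigma> tk \<omega> * Z tk \<omega>\<bar> - g0 * (\<sigma> tk \<omega> * Z tk \<omega>))\<^sup>2) + C0 \<omega>"
    if "\<forall>t. X t \<omega> = \<sigma> t \<omega> * Z t \<omega>" for \<omega>
    unfolding C0_def x0_def tk_def by (rule h_split) (use that kmin in \<open>auto simp: x0_def\<close>)
  have AE_P: "AE \<omega> in M. P (W \<omega>) (Z tk \<omega>)"
    using X_eq h_eq
  proof eventually_elim
    case (elim \<omega>)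
    then show ?case using split1[OF elim(1)] split0[OF elim(1)] unfolding P_def W_def by simp
  qed
  have AE_Q: "AE \<omega> in M. Q (W \<omega>)"
    using X_eq \<sigma>_eq AE_space
  proof eventually_elim
    case (elim \<omega>)
    have s2: "(\<sigma> tk \<omega>)\<^sup>2 \<ge> a0 0"
    proof -
      have "0 \<le> (\<Sum>i=1..p. a0 i * (\<bar>X (tk - int i) \<omega>\<bar> - g0 * X (tk - int i) \<omega>)\<^sup>2)"
        using a0nn by (intro sum_nonneg mult_nonneg_nonneg) auto
      moreover have "0 \<le> (\<Sum>j=1..q. b0 j * (\<sigma> (tk - int j) \<omega>)\<^sup>2)"
        using b0nn by (intro sum_nonneg mult_nonneg_nonneg) auto
      ultimately show ?thesis using elim(2)[rule_format, of tk] by linarith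
    qed
    have "\<sigma> tk \<omega> \<noteq> 0" using s2 a00 by (auto simp: power2_eq_square)
    moreover have "\<sigma> tk \<omega> \<ge> 0" using \<sigma>_nonneg elim(3) by auto
    ultimately have pos: "\<sigma> tk \<omega> > 0" by linarith
    have "agarch_h p q X (a0,b0,g0) 0 \<omega> < \<infinity>"
      using h_fin[of p a0 q b0 \<sigma> \<omega> X g0, OF a0nn b0nn less_imp_le[OF a00] elim(2)] .
    then have "C0 \<omega> < \<infinity>" unfolding split0[OF elim(1)]
      by (simp add: less_top[symmetric] ennreal_add_eq_top)
    then show ?case using pos unfolding Q_def W_def by simp
  qed
  have indep: "indep_var N W N V"
  proof -
    define E where "E = (\<lambda>j. {Z j -` B \<inter> space M | B. B \<in> sets (borel :: real measure)})"
    define I where "I = (\<lambda>b::bool. if b then {..tk - 1} else {tk})"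
    have ind0: "indep_sets E UNIV" using Z_indep unfolding indep_vars_def2 E_def by auto
    have col: "indep_sets (\<lambda>b. sigma_sets (space M) (\<Union>i\<in>I b. E i)) UNIV"
    proof (rule indep_sets_collect_sigma)
      show "indep_sets E (\<Union>b\<in>UNIV. I b)" using ind0 by (rule indep_sets_mono_index[rotated]) simp
      show "Int_stable (E i)" for i
      proof (rule Int_stableI)
        fix x y assume "x \<in> E i" "y \<in> E i"
        then obtain A B where "A \<in> sets borel" "B \<in> sets borel" "x = Z i -` A \<inter> space M" "y = Z i -` B \<inter> space M"
          unfolding E_def by auto
        then show "x \<inter> y \<in> E i" unfolding E_def by (intro CollectI exI[of _ "A \<inter> B"]) auto
      qed
      show "disjoint_family_on I UNIV"
        unfolding disjoint_family_on_def I_def by auto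
    qed
    have FE: "sets F = sigma_sets (space M) (\<Union>i\<in>I True. E i)"
      unfolding F_def I_def E_def by (simp add: nf_sets)
    have "indep_set (sigma_sets (space M) {W -` A \<inter> space M | A. A \<in> sets N})
                    (sigma_sets (space M) {V -` A \<inter> space M | A. A \<in> sets N})"
      unfolding indep_set_def
    proof (rule indep_sets_mono_sets[OF col])
      fix b :: bool
      show "case_bool (sigma_sets (space M) {W -` A \<inter> space M | A. A \<in> sets N})
                      (sigma_sets (space M) {V -` A \<inter> space M | A. A \<in> sets N}) b
            \<subseteq> sigma_sets (space M) (\<Union>i\<in>I b. E i)"
      proof (cases b)
        case True
        have "{W -` A \<inter> space M | A. A \<in> sets N} \<subseteq> sets F"
          using measurable_sets[OF WF] unfolding F_def by auto
        then have "sigma_sets (space F) {W -` A \<inter> space M | A. A \<in> sets N} \<subseteq> sets F"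
          by (rule sets.sigma_sets_subset)
        then show ?thesis using True FE by (simp add: F_def)
      next
        case False
        have "{V -` A \<inter> space M | A. A \<in> sets N} \<subseteq> E tk"
        proof
          fix x assume "x \<in> {V -` A \<inter> space M | A. A \<in> sets N}"
          then obtain A where A: "A \<in> sets N" "x = V -` A \<inter> space M" by auto
          have hm: "(\<lambda>z::real. (z, 0::ennreal, 0::ennreal)) \<in> borel \<rightarrow>\<^sub>M N" unfolding N_def by measurable
          have "(\<lambda>z::real. (z, 0::ennreal, 0::ennreal)) -` A \<inter> space borel \<in> sets borel"
            using measurable_sets[OF hm A(1)] .
          moreover have "x = Z tk -` ((\<lambda>z::real. (z, 0::ennreal, 0::ennreal)) -` A \<inter> space borel) \<inter> space M"
            using A(2) unfolding V_def by auto
          ultimately show "x \<in> E tk" unfolding E_def by blast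
        qed
        then have "sigma_sets (space M) {V -` A \<inter> space M | A. A \<in> sets N} \<subseteq> sigma_sets (space M) (E tk)"
          by (rule sigma_sets_mono')
        then show ?thesis using False by (simp add: I_def)
      qed
    qed
    then show ?thesis unfolding indep_var_eq using WM VM by simp
  qed
  have prodeq: "distr M N W \<Otimes>\<^sub>M distr M N V = distr M (N \<Otimes>\<^sub>M N) (\<lambda>x. (W x, V x))"
    using indep indep_var_distribution_eq by auto
  interpret DW: prob_space "distr M N W" by (rule prob_space_distr[OF WM])
  interpret DV: prob_space "distr M N V" by (rule prob_space_distr[OF VM])
  interpret PP: pair_prob_space "distr M N W" "distr M N V" ..
  have setsPP: "sets (distr M N W \<Otimes>\<^sub>M distr M N V) = sets (N \<Otimes>\<^sub>M N)"
    by (intro sets_pair_measure_cong) simp_all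
  have spacePP: "space (distr M N W \<Otimes>\<^sub>M distr M N V) = space (N \<Otimes>\<^sub>M N)"
    using sets_eq_imp_space_eq[OF setsPP] .
  have "AE x in distr M (N \<Otimes>\<^sub>M N) (\<lambda>x. (W x, V x)). P (fst x) (fst (snd x))"
  proof (subst AE_distr_iff)
    show "(\<lambda>x. (W x, V x)) \<in> M \<rightarrow>\<^sub>M N \<Otimes>\<^sub>M N" using WM VM by (rule measurable_Pair)
    show "{x \<in> space (N \<Otimes>\<^sub>M N). P (fst x) (fst (snd x))} \<in> sets (N \<Otimes>\<^sub>M N)" by (rule Pmeas)
    show "AE x in M. P (fst (W x, V x)) (fst (snd (W x, V x)))" using AE_P by (simp add: V_def)
  qed
  then have "AE x in distr M N W \<Otimes>\<^sub>M distr M N V. P (fst x) (fst (snd x))"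
    by (simp only: prodeq)
  then have AEWV: "AE w in distr M N W. AE v in distr M N V. P w (fst v)"
    using PP.AE_pair_iff[of "\<lambda>w v. P w (fst v)"] Pmeas setsPP spacePP by simp
  have AEWQ: "AE w in distr M N W. Q w"
    using AE_Q by (subst AE_distr_iff[OF WM Qmeas])
  have "\<exists>w. Q w \<and> (AE v in distr M N V. P w (fst v))"
  proof (rule ccontr)
    assume nex: "\<nexists>w. Q w \<and> (AE v in distr M N V. P w (fst v))"
    have "AE w in distr M N W. False" using AEWV AEWQ
    proof eventually_elim
      case (elim w)
      then show ?case using nex by blast
    qed
    then show False using DW.AE_False by simp
  qed
  then obtain w where Qw: "Q w" and Pw: "AE v in distr M N V. P w (fst v)" by blast
  have AEZ0: "AE \<omega> in M. P w (Z 0 \<omega>)"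
  proof -
    define h where "h = (\<lambda>z::real. (z, 0::ennreal, 0::ennreal))"
    have hm: "h \<in> borel \<rightarrow>\<^sub>M N" unfolding N_def h_def by measurable
    have "distr M N V = distr (distr M borel (Z tk)) N h"
      using distr_distr[OF hm Zm[of tk]] by (simp add: V_def h_def comp_def)
    also have "\<dots> = distr (distr M borel (Z 0)) N h" by (simp only: Z_ident[rule_format, of tk])
    also have "\<dots> = distr M N V0"
      using distr_distr[OF hm Zm[of 0]] by (simp add: V0_def h_def comp_def)
    finally have "AE v in distr M N V0. P w (fst v)" using Pw by metis
    moreover have "{v \<in> space N. P w (fst v)} \<in> sets N" unfolding P_def N_def by measurable
    ultimately show ?thesis using AE_distr_iff[OF V0M] by (simp add: V0_def)
  qed
  obtain s c1 c2 where wdef: "w = (s, c1, c2)" by (cases w)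
  have spos: "s > 0" and c2fin: "c2 < \<infinity>" using Qw unfolding Q_def wdef by auto
  define A where "A = xa (Suc k)"
  define B where "B = x0 (Suc k)"
  define C where "C = enn2real c2 - enn2real c1"
  have Eq: "A*(\<bar>s*z\<bar> - g*(s*z))\<^sup>2 - B*(\<bar>s*z\<bar> - g0*(s*z))\<^sup>2 = C" if "P w z" for z
    using that unfolding P_def wdef A_def B_def C_def
    by (intro enn_eq_real[OF _ c2fin]) (auto intro!: mult_nonneg_nonneg xa_nn x0_nn)
  have Z0m: "Z 0 \<in> borel_measurable M" by (rule Zm)
  have not_ae_two: "\<not> (AE \<omega> in M. Z 0 \<omega> = x \<or> Z 0 \<omega> = y)" for x y
  proof
    assume "AE \<omega> in M. Z 0 \<omega> = x \<or> Z 0 \<omega> = y"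
    moreover have "{\<omega> \<in> space M. Z 0 \<omega> = x \<or> Z 0 \<omega> = y} \<in> sets M" using Z0m by measurable
    ultimately have "prob {\<omega> \<in> space M. Z 0 \<omega> = x \<or> Z 0 \<omega> = y} = 1"
      using prob_Collect_eq_1[of "\<lambda>\<omega>. Z 0 \<omega> = x \<or> Z 0 \<omega> = y"] by simp
    then show False using Z_not_two by blast
  qed
  have third: "\<exists>\<omega>\<in>space M. P w (Z 0 \<omega>) \<and> Z 0 \<omega> \<noteq> x \<and> Z 0 \<omega> \<noteq> y" for x y
  proof (rule ccontr)
    assume nex: "\<not> ?thesis"
    have "AE \<omega> in M. Z 0 \<omega> = x \<or> Z 0 \<omega> = y" using AEZ0 AE_space
    proof eventually_elim
      case (elim \<omega>) then show ?case using nex by blast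
    qed
    then show False using not_ae_two by blast
  qed
  have pos: "\<exists>\<omega>\<in>space M. P w (Z 0 \<omega>) \<and> Z 0 \<omega> > 0"
  proof (rule ccontr)
    assume nex: "\<not> ?thesis"
    have le: "AE \<omega> in M. 0 \<le> - Z 0 \<omega>" using AEZ0 AE_space
    proof eventually_elim
      case (elim \<omega>) then show ?case using nex by force
    qed
    have "integral\<^sup>L M (\<lambda>\<omega>. - Z 0 \<omega>) = 0" using Z_mean by simp
    then have "AE \<omega> in M. - Z 0 \<omega> = 0"
      using integral_nonneg_eq_0_iff_AE[OF integrable_minus[OF Z_int] le] by simp
    then have "AE \<omega> in M. Z 0 \<omega> = 0 \<or> Z 0 \<omega> = 0" by auto
    then show False using not_ae_two by blast
  qed
  have neg: "\<exists>\<omega>\<in>space M. P w (Z 0 \<omega>) \<and> Z 0 \<omega> < 0"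
  proof (rule ccontr)
    assume nex: "\<not> ?thesis"
    have le: "AE \<omega> in M. 0 \<le> Z 0 \<omega>" using AEZ0 AE_space
    proof eventually_elim
      case (elim \<omega>) then show ?case using nex by force
    qed
    then have "AE \<omega> in M. Z 0 \<omega> = 0"
      using integral_nonneg_eq_0_iff_AE[OF Z_int le] Z_mean by simp
    then have "AE \<omega> in M. Z 0 \<omega> = 0 \<or> Z 0 \<omega> = 0" by auto
    then show False using not_ae_two by blast
  qed
  obtain \<omega>1 where o1: "P w (Z 0 \<omega>1)" "Z 0 \<omega>1 > 0" using pos by blast
  obtain \<omega>2 where o2: "P w (Z 0 \<omega>2)" "Z 0 \<omega>2 < 0" using neg by blast
  obtain \<omega>3 where o3: "P w (Z 0 \<omega>3)" "Z 0 \<omega>3 \<noteq> Z 0 \<omega>1" "Z 0 \<omega>3 \<noteq> Z 0 \<omega>2"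
    using third[of "Z 0 \<omega>1" "Z 0 \<omega>2"] by blast
  show ?thesis
  proof (rule key_alg[of A B g g0 "s * Z 0 \<omega>1" "s * Z 0 \<omega>2" "s * Z 0 \<omega>3" C])
    show "0 \<le> A" unfolding A_def by (rule xa_nn)
    show "0 \<le> B" unfolding B_def by (rule x0_nn)
    show "0 < A \<or> 0 < B" unfolding A_def B_def by (rule kpos)
    show "\<bar>g\<bar> \<le> 1" by (rule gb)
    show "\<bar>g0\<bar> \<le> 1" by (rule g0b)
    show "\<And>u. u \<in> {s * Z 0 \<omega>1, s * Z 0 \<omega>2, s * Z 0 \<omega>3} \<Longrightarrow>
        A * (\<bar>u\<bar> - g * u)\<^sup>2 - B * (\<bar>u\<bar> - g0 * u)\<^sup>2 = C"
      using Eq o1(1) o2(1) o3(1) by blast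
    show "0 < s * Z 0 \<omega>1" using spos o1 by simp
    show "s * Z 0 \<omega>2 < 0" using spos o2 by (simp add: mult_pos_neg)
    show "s * Z 0 \<omega>3 \<noteq> s * Z 0 \<omega>1" using spos o3 by simp
    show "s * Z 0 \<omega>3 \<noteq> s * Z 0 \<omega>2" using spos o3 by simp
  qed
qed

end
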